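(* Let $d\in\mathbb{N}$, let $D_d\subset\mathbb{R}^d$ be bounded with Lebesgue measure $\lambda_d(D_d)=1$, and let $R_d=\operatorname{rad}(D_d)/\sqrt{d}$. Let $K$ be the convex hull of $n$ points $x_1,\dots,x_n\in D_d$ and let $\delta>0$. Then \[ \lambda_d(K_\delta) \,<\, n\, \Bigl((R_d + 2\delta) \sqrt{\tfrac{\pi e}{2}} \Bigr)^d . \]
   Context: For $A\subset\mathbb{R}^d$ and $\delta>0$, $A_\delta=\{x\in\mathbb{R}^d \mid \operatorname{dist}(x,A)\le \delta\sqrt{d}\}$, where $\operatorname{dist}(x,A)=\inf_{a\in A}\|x-a\|_2$. The radius of a set $D\subset\mathbb{R}^d$ is $\operatorname{rad}(D)=\inf_{x\in\mathbb{R}^d}\sup_{y\in D}\|y-x\|_2$. $\lambda_d$ denotes $d$-dimensional Lebesgue measure. *)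

theory Defs
  imports "HOL-Analysis.Analysis"
begin

text \<open>Parallel body A_delta = points within distance delta * sqrt d of A (d = dimension).
  For nonempty A, infdist is the usual distance to the set.\<close>
definition parallel_body :: "'a::euclidean_space set \<Rightarrow> real \<Rightarrow> 'a set" where
  "parallel_body A \<delta> = {x. infdist x A \<le> \<delta> * sqrt (real DIM('a))}"

definition rad :: "'a::euclidean_space set \<Rightarrow> real" where
  "rad D = (INF x. (SUP y\<in>D. dist y x))"

end

theory Submission
  imports Defs
begin

lemma Gamma_lower:
  fixes x :: real assumes x: "x > 0"
  shows "x powr x * exp (-x) < Gamma (x + 1)"
proof -
  have f: "((\<lambda>t. t powr x / exp t) has_integral Gamma (x+1)) {0..}"
    using Gamma_integral_real[of "x+1"] x by simp
  have "((\<lambda>t. exp (-1*t)) has_integral exp (-1*x)/1) {x..}"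
    by (rule has_integral_exp_minus_to_infinity) auto
  hence "((\<lambda>t. x powr x * exp (-t)) has_integral x powr x * exp (-x)) {x..}"
    using has_integral_mult_right[of "\<lambda>t. exp (-1*t)" "exp (-1*x)/1" "{x..}" "x powr x"] by simp
  hence g1: "((\<lambda>t. if t \<in> {x..} then x powr x * exp (-t) else 0) has_integral x powr x * exp (-x)) {0..}"
    using x by (subst has_integral_restrict) auto
  define c where "c = (x/4) powr x * exp (-x)"
  have "((\<lambda>t. c) has_integral (measure lborel {x/4..x/2} *\<^sub>R c)) {x/4..x/2}" by blast
  hence "((\<lambda>t. c) has_integral (x/4 * c)) {x/4..x/2}" using x by simp
  hence g2: "((\<lambda>t. if t \<in> {x/4..x/2} then c else 0) has_integral (x/4 * c)) {0..}"
    using x by (subst has_integral_restrict) auto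
  have le: "(if t \<in> {x..} then x powr x * exp (-t) else 0) + (if t \<in> {x/4..x/2} then c else 0)
      \<le> t powr x / exp t" if t: "t \<in> {0..}" for t
  proof (cases "t \<ge> x")
    case True
    then have "t \<notin> {x/4..x/2}" using x by auto
    moreover have "x powr x * exp (-t) \<le> t powr x / exp t"
      using True x by (simp add: exp_minus divide_simps powr_mono2)
    ultimately show ?thesis using True by auto
  next
    case False
    show ?thesis
    proof (cases "t \<in> {x/4..x/2}")
      case True
      have "(x/4) powr x \<le> t powr x" using True x by (intro powr_mono2) auto
      moreover have "exp (-x) \<le> 1 / exp t" proof - have "1 / exp t = exp (-t)" by (simp add: exp_minus divide_inverse) thus ?thesis using True x by simp qed
      ultimately have "c \<le> t powr x * (1 / exp t)" unfolding c_def
        by (intro mult_mono) auto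
      then show ?thesis using False True by simp
    next
      case False2: False
      then show ?thesis using False by auto
    qed
  qed
  have "x powr x * exp (-x) + x/4 * c \<le> Gamma (x+1)"
    by (rule has_integral_le[OF has_integral_add[OF g1 g2] f le])
  moreover have "c > 0" using x unfolding c_def by simp
  then have "x/4 * c > 0" using x by simp
  ultimately show ?thesis by linarith
qed

lemma ubv_bound:
  assumes d: "d \<ge> (1::nat)"
  shows "unit_ball_vol (real d) * (sqrt (real d) / 2) ^ d < sqrt (pi * exp 1 / 2) ^ d"
proof -
  define x where "x = real d / 2"
  have x: "x > 0" using d by (simp add: x_def)
  have G: "x powr x * exp (-x) < Gamma (x + 1)" using Gamma_lower[OF x] .
  have rd: "real d = 2 * x" by (simp add: x_def)
  have pw: "a ^ d = (a^2) powr x" if "a > 0" for a :: real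
  proof -
    have "a ^ d = a powr real d" using that by (simp add: powr_realpow)
    also have "\<dots> = (a powr 2) powr x" by (simp add: powr_powr rd)
    also have "a powr 2 = a^2" using that by (simp add: powr_realpow)
    finally show ?thesis .
  qed
  have e1: "(sqrt (real d) / 2) ^ d = (x/2) powr x"
    using d by (subst pw) (auto simp: power_divide x_def)
  have e2: "sqrt (pi * exp 1 / 2) ^ d = (pi * exp 1 / 2) powr x"
    by (subst pw) (auto simp: power_divide)
  have ubv: "unit_ball_vol (real d) = pi powr x / Gamma (x+1)"
    by (simp add: unit_ball_vol_def x_def)
  have pos: "x powr x * exp (-x) > 0" using x by simp
  have "pi powr x / Gamma (x+1) * (x/2) powr x < pi powr x / (x powr x * exp (-x)) * (x/2) powr x"
    using G pos x by (intro mult_strict_right_mono divide_strict_left_mono) auto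
  also have "\<dots> = (pi * exp 1 / 2) powr x"
    using x by (simp add: powr_mult powr_divide exp_powr_real exp_minus field_simps)
  finally show ?thesis using e1 e2 ubv by simp
qed


lemma rad_center:
  fixes D :: "'a::euclidean_space set"
  assumes bD: "bounded D" and ne: "D \<noteq> {}"
  obtains c where "\<And>y. y \<in> D \<Longrightarrow> dist y c \<le> rad D"
proof -
  define S where "S = (\<lambda>x::'a. SUP y\<in>D. dist y x)"
  have bdd: "bdd_above ((\<lambda>y. dist y x) ` D)" for x
  proof -
    obtain e where "\<forall>y\<in>D. dist x y \<le> e" using bD bounded_any_center by blast
    then show ?thesis by (auto simp: dist_commute intro!: bdd_aboveI2[of _ _ e])
  qed
  have le: "dist y x \<le> S x" if "y \<in> D" for x y
    unfolding S_def using bdd that by (intro cSUP_upper) auto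
  have Snn: "S x \<ge> 0" for x using le ne by (meson zero_le_dist ex_in_conv order_trans)
  have bb: "bdd_below (range S)" using Snn by (intro bdd_belowI[of _ 0]) auto
  have radS: "rad D = (INF x. S x)" unfolding rad_def S_def by simp
  define F where "F = (\<lambda>n::nat. \<Inter>y\<in>D. cball y (rad D + 1 / real (Suc n)))"
  have "\<Inter>(range F) \<noteq> {}"
  proof (rule compact_nest)
    fix n
    obtain y0 where y0: "y0 \<in> D" using ne by blast
    have "closed (F n)" unfolding F_def by (intro closed_INT) auto
    moreover have "bounded (F n)" unfolding F_def
      by (rule bounded_subset[OF bounded_cball[of y0 "rad D + 1 / real (Suc n)"]]) (use y0 in auto)
    ultimately show "compact (F n)" by (simp add: compact_eq_bounded_closed)
    have "(INF x. S x) < rad D + 1 / real (Suc n)" using radS by simp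
    then obtain x where "S x < rad D + 1 / real (Suc n)"
      using bb by (subst (asm) cINF_less_iff) auto
    then have "\<forall>y\<in>D. dist y x \<le> rad D + 1 / real (Suc n)"
      using le by (meson less_imp_le order_trans)
    then have "x \<in> F n" unfolding F_def by (simp add: mem_cball)
    then show "F n \<noteq> {}" by blast
  next
    fix m n :: nat assume "m \<le> n"
    then have "1 / real (Suc n) \<le> 1 / real (Suc m)" by (simp add: frac_le)
    then show "F n \<subseteq> F m" unfolding F_def by (fastforce simp: mem_cball)
  qed
  then obtain c where c: "\<And>n. c \<in> F n" by blast
  show ?thesis
  proof (rule that)
    fix y assume y: "y \<in> D"
    show "dist y c \<le> rad D"
    proof (rule ccontr)
      assume "\<not> ?thesis"
      then obtain n where "inverse (real (Suc n)) < dist y c - rad D"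
        using reals_Archimedean[of "dist y c - rad D"] by auto
      moreover have "dist y c \<le> rad D + 1 / real (Suc n)" using c[of n] y unfolding F_def by auto
      ultimately show False by (simp add: inverse_eq_divide)
    qed
  qed
qed

lemma elekes:
  fixes S :: "'a::euclidean_space set"
  assumes fin: "finite S" and y: "y \<in> convex hull S"
  shows "\<exists>p\<in>S. dist y ((1/2) *\<^sub>R (p + c)) \<le> dist p c / 2"
proof -
  obtain u where u0: "\<forall>p\<in>S. 0 \<le> u p" and u1: "sum u S = 1" and uy: "(\<Sum>p\<in>S. u p *\<^sub>R p) = y"
    using y fin by (auto simp: convex_hull_finite)
  have "\<exists>p\<in>S. (y - p) \<bullet> (y - c) \<le> 0"
  proof (rule ccontr)
    assume "\<not> ?thesis"
    then have pos: "\<forall>p\<in>S. (y - p) \<bullet> (y - c) > 0" by auto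
    obtain q where q: "q \<in> S" "u q > 0"
    proof -
      have "\<exists>q\<in>S. u q \<noteq> 0" using u1 by (metis sum.neutral zero_neq_one)
      then show ?thesis using u0 that by force
    qed
    have "0 < (\<Sum>p\<in>S. u p * ((y - p) \<bullet> (y - c)))"
      using q pos u0 fin by (intro sum_pos2[of S q]) auto
    also have "\<dots> = (\<Sum>p\<in>S. u p *\<^sub>R (y - p)) \<bullet> (y - c)"
      by (simp add: inner_sum_left)
    also have "(\<Sum>p\<in>S. u p *\<^sub>R (y - p)) = (\<Sum>p\<in>S. u p *\<^sub>R y) - (\<Sum>p\<in>S. u p *\<^sub>R p)"
      by (simp add: scaleR_diff_right sum_subtractf)
    also have "\<dots> = 0" using u1 uy by (simp add: scaleR_sum_left[symmetric])
    finally show False by simp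
  qed
  then obtain p where p: "p \<in> S" "(y - p) \<bullet> (y - c) \<le> 0" by blast
  have id: "(norm (y - (1/2) *\<^sub>R (p + c)))^2 = (y - p) \<bullet> (y - c) + (norm (p - c))^2 / 4"
    by (simp add: power2_norm_eq_inner inner_diff_left inner_diff_right inner_add_left
        inner_add_right inner_commute algebra_simps field_simps)
  have "(norm (y - (1/2) *\<^sub>R (p + c)))^2 \<le> (norm (p - c) / 2)^2"
    using id p by (simp add: power_divide)
  then have "norm (y - (1/2) *\<^sub>R (p + c)) \<le> norm (p - c) / 2"
    by (rule power2_le_imp_le) simp
  then show ?thesis using p by (auto simp: dist_norm)
qed

theorem theorem2p1:
  fixes D :: "'a::euclidean_space set" and x :: "nat \<Rightarrow> 'a" and n :: nat and \<delta> :: real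
  assumes "bounded D"
    and "D \<in> sets lebesgue" and "measure lebesgue D = 1"
    and "n \<ge> 1"
    and "\<forall>i<n. x i \<in> D"
    and "\<delta> > 0"
  shows "measure lebesgue (parallel_body (convex hull (x ` {..<n})) \<delta>)
     < real n * ((rad D / sqrt (real DIM('a)) + 2 * \<delta>) * sqrt (pi * exp 1 / 2)) ^ DIM('a)"
proof -
  define d where "d = DIM('a)"
  have d1: "d \<ge> 1" unfolding d_def by (simp add: DIM_positive Suc_leI)
  have Dne: "D \<noteq> {}" using assms(3) by auto
  obtain c where c: "\<And>y. y \<in> D \<Longrightarrow> dist y c \<le> rad D" using rad_center[OF assms(1) Dne] by blast
  have rad0: "rad D \<ge> 0" using Dne c by (meson ex_in_conv order_trans zero_le_dist)
  define S where "S = x ` {..<n}"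
  define K where "K = convex hull S"
  have finS: "finite S" unfolding S_def by simp
  have Sne: "S \<noteq> {}" using assms(4) unfolding S_def by (metis empty_iff image_is_empty lessThan_iff less_le_trans zero_less_one)
  have Kc: "compact K" unfolding K_def using finS by (simp add: compact_convex_hull finite_imp_compact)
  have Kne: "K \<noteq> {}" unfolding K_def using Sne by simp
  define s where "s = rad D / 2 + \<delta> * sqrt (real d)"
  have s0: "s \<ge> 0" unfolding s_def using rad0 assms(6) by simp
  define m where "m = (\<lambda>i. (1/2) *\<^sub>R (x i + c))"
  define U where "U = (\<Union>i\<in>{..<n}. cball (m i) s)"
  define P where "P = parallel_body K \<delta>"
  have PU: "P \<subseteq> U"
  proof
    fix z assume "z \<in> P"
    then have zK: "infdist z K \<le> \<delta> * sqrt (real d)" unfolding P_def parallel_body_def d_def by simp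
    obtain y where y: "y \<in> K" "infdist z K = dist z y"
      using infdist_attains_inf[OF compact_imp_closed[OF Kc] Kne] by metis
    obtain p where p: "p \<in> S" "dist y ((1/2) *\<^sub>R (p + c)) \<le> dist p c / 2"
      using elekes[OF finS y(1)[unfolded K_def]] by blast
    then obtain i where i: "i < n" "p = x i" unfolding S_def by auto
    have "dist p c \<le> rad D" using c assms(5) i by simp
    then have "dist y (m i) \<le> rad D / 2" using p i unfolding m_def by simp
    then have "dist z (m i) \<le> s" using zK y dist_triangle[of z "m i" y] unfolding s_def by linarith
    then show "z \<in> U" unfolding U_def using i by (auto simp: dist_commute)
  qed
  have Uc: "compact U" unfolding U_def by (intro compact_UN) auto
  have Pcl: "closed P" unfolding P_def parallel_body_def
    by (intro closed_Collect_le continuous_on_infdist continuous_on_id continuous_on_const)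
  have Pc: "compact P" using Pcl PU Uc by (meson compact_eq_bounded_closed bounded_subset)
  have "measure lebesgue P \<le> measure lebesgue U"
    using PU lmeasurable_compact[OF Pc] lmeasurable_compact[OF Uc]
    by (intro measure_mono_fmeasurable) (auto simp: fmeasurable_def)
  also have "\<dots> \<le> (\<Sum>i\<in>{..<n}. measure lebesgue (cball (m i) s))"
    unfolding U_def by (intro measure_UNION_le) auto
  also have "\<dots> = real n * (unit_ball_vol (real d) * s ^ d)"
    using s0 by (simp add: content_cball d_def)
  also have "\<dots> < real n * ((rad D / sqrt (real d) + 2 * \<delta>) * sqrt (pi * exp 1 / 2)) ^ d"
  proof -
    define A where "A = rad D / sqrt (real d) + 2 * \<delta>"
    have "rad D / sqrt (real d) \<ge> 0" using rad0 by simp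
    then have A: "A > 0" unfolding A_def using assms(6) by linarith
    have sd: "s = (sqrt (real d) / 2) * A"
      unfolding s_def A_def using d1 by (simp add: field_simps)
    have "unit_ball_vol (real d) * s ^ d = (unit_ball_vol (real d) * (sqrt (real d) / 2) ^ d) * A ^ d"
      unfolding sd power_mult_distrib by simp
    also have "\<dots> < sqrt (pi * exp 1 / 2) ^ d * A ^ d"
      using ubv_bound[OF d1] A by (intro mult_strict_right_mono) auto
    finally have "unit_ball_vol (real d) * s ^ d < (A * sqrt (pi * exp 1 / 2)) ^ d"
      by (simp add: power_mult_distrib mult.commute)
    then show ?thesis unfolding A_def using assms(4) by simp
  qed
  finally show ?thesis unfolding P_def K_def S_def d_def .
qed

end
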